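(* Let $X_1,X_2,\dots$ be iid real random variables with common continuous distribution function $F$ having a (Lebesgue) density $f$. For integers $1\le j<k$ let $g_{j,k}$ be the density of $G_{j,k}(x):=\Pr(X_j\le x\mid X_j\text{ and }X_k\text{ are records})$, namely $g_{j,k}(x)=\frac{jk}{k-j}f(x)\left(F^{j-1}(x)-F^{k-1}(x)\right)$, and let $g_j$ be the density of $G_j(x):=\Pr(X_j\le x\mid X_j\text{ is a record})$, namely $g_j(x)=jf(x)F^{j-1}(x)$. Then \[ D_{KL}(g_{j,k},g_j)=\frac{j}{k}. \]
   Context: $X_m$ is a record if $X_m>\max(X_1,\dots,X_{m-1})$; $X_1$ is always a record. For densities $p,q$ the Kullback–Leibler divergence is $D_{KL}(p\|q)=\int_{-\infty}^{\infty}p(x)\log\frac{p(x)}{q(x)}\,dx$, and the Kullback–Leibler distance is $D_{KL}(p,q)=D_{KL}(p\|q)+D_{KL}(q\|p)$. *)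

theory Defs
  imports "HOL-Analysis.Analysis"
begin

text \<open>Kullback--Leibler divergence of densities on the real line (Lebesgue integral),
  with the usual convention that the integrand vanishes where p x = 0.\<close>
definition KL_div :: "(real \<Rightarrow> real) \<Rightarrow> (real \<Rightarrow> real) \<Rightarrow> real" where
  "KL_div p q = (LINT x|lborel. p x * ln (p x / q x))"

definition KL_dist :: "(real \<Rightarrow> real) \<Rightarrow> (real \<Rightarrow> real) \<Rightarrow> real" where
  "KL_dist p q = KL_div p q + KL_div q p"

definition g2 :: "(real \<Rightarrow> real) \<Rightarrow> (real \<Rightarrow> real) \<Rightarrow> nat \<Rightarrow> nat \<Rightarrow> real \<Rightarrow> real" where
  "g2 f F j k x = real (j * k) / real (k - j) * f x * (F x ^ (j - 1) - F x ^ (k - 1))"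

definition g1 :: "(real \<Rightarrow> real) \<Rightarrow> (real \<Rightarrow> real) \<Rightarrow> nat \<Rightarrow> real \<Rightarrow> real" where
  "g1 f F j x = real j * f x * F x ^ (j - 1)"

end

theory Submission imports Defs "HOL-Probability.Probability" "HOL-Real_Asymp.Real_Asymp" begin
lemma analytic_deriv:
  fixes a b :: nat and u :: real
  assumes u: "0 < u" "u < 1"
  defines "c \<equiv> real (Suc a + Suc b) / real (Suc b)"
  defines "r \<equiv> \<lambda>u::real. c * (1 - u^Suc b)"
  shows "((\<lambda>u. real (Suc a) / real (Suc b) * (u^Suc a * (1 - u^Suc b)) * ln (r u) + real (Suc a) / real (Suc a + Suc b) * u^(Suc a + Suc b))
     has_real_derivative (real (Suc a) * u^a * ((r u - 1) * ln (r u)))) (at u)"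
proof -
  have ub: "u^Suc b < 1" using u by (metis less_eq_real_def power_less_one_iff zero_less_Suc)
  have rpos: "r u > 0" unfolding r_def c_def using ub by auto
  have d1: "((\<lambda>u. u^Suc a * (1 - u^Suc b)) has_real_derivative
      (real (Suc a) * u^a * (1 - u^Suc b) - u^Suc a * (real (Suc b) * u^b))) (at u)"
    by (rule derivative_eq_intros refl)+ (simp add: algebra_simps)
  have d2: "(r has_real_derivative (c * (- (real (Suc b) * u^b)))) (at u)"
    unfolding r_def by (rule derivative_eq_intros refl)+ (simp add: algebra_simps)
  have d3: "((\<lambda>u. ln (r u)) has_real_derivative (c * (- (real (Suc b) * u^b))) / r u) (at u)"
    using DERIV_chain2[OF DERIV_ln_divide[OF rpos] d2] by simp
  have d4: "((\<lambda>u. u^(Suc a + Suc b)) has_real_derivative real (Suc a + Suc b) * u^(Suc a + b)) (at u)"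
    by (rule derivative_eq_intros refl)+ simp
  note D = DERIV_add[OF DERIV_mult[OF DERIV_cmult[OF d1, of "real (Suc a) / real (Suc b)"] d3] DERIV_cmult[OF d4, of "real (Suc a) / real (Suc a + Suc b)"]]
  define A where "A = real (Suc a) / real (Suc b)"
  define d1' where "d1' = real (Suc a) * u^a * (1 - u^Suc b) - u^Suc a * (real (Suc b) * u^b)"
  define d3' where "d3' = (c * (- (real (Suc b) * u^b))) / r u"
  have "1 - u^Suc b \<noteq> 0" using ub by simp
    have cnz: "c \<noteq> 0" unfolding c_def by simp
    have f1: "(c * (- (real (Suc b) * u^b))) / r u = - (real (Suc b) * u^b) / (1 - u^Suc b)"
      unfolding r_def using cnz by simp
    have e1: "A * (u^Suc a * (1 - u^Suc b)) * d3'
       = - real (Suc a) * u^(Suc a + b)"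
      unfolding f1 A_def d3'_def using \<open>1 - u^Suc b \<noteq> 0\<close> by (simp add: power_add field_simps del: of_nat_Suc)
    have e2: "real (Suc a) / real (Suc a + Suc b) * (real (Suc a + Suc b) * u^(Suc a + b)) = real (Suc a) * u^(Suc a + b)"
      by (simp del: of_nat_add add_Suc_right add_Suc)
    have e3: "A * d1'
       = real (Suc a) * u^a * (r u - 1)"
      unfolding r_def c_def A_def d1'_def by (simp add: field_simps power_add)
  have "(A * d1') * ln (r u) + d3' * (A * (u^Suc a * (1 - u^Suc b))) + real (Suc a) / real (Suc a + Suc b) * (real (Suc a + Suc b) * u^(Suc a + b))
     = (A * d1') * ln (r u) + A * (u^Suc a * (1 - u^Suc b)) * d3' + real (Suc a) / real (Suc a + Suc b) * (real (Suc a + Suc b) * u^(Suc a + b))"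
    by (simp only: mult.commute[of d3'])
  also have "\<dots> = real (Suc a) * u^a * (r u - 1) * ln (r u) + (- real (Suc a) * u^(Suc a + b)) + real (Suc a) * u^(Suc a + b)"
    by (simp only: e1 e2 e3)
  also have "\<dots> = real (Suc a) * u^a * ((r u - 1) * ln (r u))" by (simp add: algebra_simps)
  finally show ?thesis using D unfolding A_def d1'_def d3'_def by simp
qed
lemma tlnct: assumes "c > (0::real)" shows "((\<lambda>t. t * ln (c * t)) \<longlongrightarrow> 0) (at_right 0)"
  using assms by real_asymp

lemma analytic:
  fixes a b :: nat
  defines "c \<equiv> real (Suc a + Suc b) / real (Suc b)"
  defines "r \<equiv> \<lambda>u::real. c * (1 - u^Suc b)"
  defines "H \<equiv> \<lambda>u. real (Suc a) * u^a * ((r u - 1) * ln (r u))"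
  shows "set_integrable lborel {0<..<1} H" "(LINT u:{0<..<1}|lborel. H u) = real (Suc a) / real (Suc a + Suc b)"
proof -
  define K where "K = (\<lambda>u. real (Suc a) / real (Suc b) * (u^Suc a * (1 - u^Suc b)) * ln (r u) + real (Suc a) / real (Suc a + Suc b) * u^(Suc a + Suc b))"
  have cpos: "c > 0" unfolding c_def by simp
  have rpos: "r u > 0" if "0 < u" "u < 1" for u
  proof -
    have ub: "u^Suc b < 1" using that by (metis less_eq_real_def power_less_one_iff zero_less_Suc)
    then show ?thesis unfolding r_def c_def by auto
  qed
  have deriv: "DERIV K u :> H u" if "0 < u" "u < 1" for u
    unfolding K_def H_def r_def c_def using analytic_deriv[OF that, of a b] by simp
  have cont: "isCont H u" if "0 < u" "u < 1" for u
    unfolding H_def using rpos[OF that] unfolding r_def by (auto intro!: continuous_intros)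
  have nonneg: "0 \<le> H u" if "0 < u" "u < 1" for u
  proof -
    have "0 \<le> (r u - 1) * ln (r u)"
    proof (cases "r u \<ge> 1")
      case True then show ?thesis by simp
    next
      case False then have "ln (r u) < 0" using rpos[OF that] by simp
      then show ?thesis using False by (simp add: mult_nonpos_nonpos)
    qed
    then show ?thesis unfolding H_def using that by simp
  qed
  have A: "(K \<longlongrightarrow> 0) (at_right 0)"
  proof -
    have "(K \<longlongrightarrow> K 0) (at 0)" unfolding K_def r_def using cpos
      by (intro tendsto_intros) auto
    moreover have "K 0 = 0" unfolding K_def by simp
    ultimately show ?thesis by (metis filterlim_at_split)
  qed
  have B: "(K \<longlongrightarrow> real (Suc a) / real (Suc a + Suc b)) (at_left 1)"
  proof -
    have t: "filterlim (\<lambda>u::real. 1 - u^Suc b) (at_right 0) (at_left 1)"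
      unfolding filterlim_at
    proof
      show "\<forall>\<^sub>F x in at_left (1::real). 1 - x ^ Suc b \<in> {0<..} \<and> 1 - x ^ Suc b \<noteq> 0"
      proof -
        have ev: "eventually (\<lambda>x. x \<in> {0<..<1}) (at_left (1::real))" by (rule eventually_at_left_real) simp
        show ?thesis
        proof (rule eventually_mono[OF ev])
        fix x :: real assume "x \<in> {0<..<1}"
        then have "x^Suc b < 1" by (metis greaterThanLessThan_iff less_eq_real_def power_less_one_iff zero_less_Suc)
        then show "1 - x ^ Suc b \<in> {0<..} \<and> 1 - x ^ Suc b \<noteq> 0" by simp
      qed
      qed
      show "((\<lambda>u::real. 1 - u^Suc b) \<longlongrightarrow> 0) (at_left 1)"
        by (rule tendsto_eq_intros refl)+ simp
    qed
    have "((\<lambda>u. (1 - u^Suc b) * ln (c * (1 - u^Suc b))) \<longlongrightarrow> 0) (at_left 1)"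
      using filterlim_compose[OF tlnct[OF cpos] t] by simp
    then have "((\<lambda>u. real (Suc a) / real (Suc b) * u^Suc a * ((1 - u^Suc b) * ln (c * (1 - u^Suc b))) + real (Suc a) / real (Suc a + Suc b) * u^(Suc a + Suc b))
        \<longlongrightarrow> real (Suc a) / real (Suc b) * 1^Suc a * 0 + real (Suc a) / real (Suc a + Suc b) * 1^(Suc a + Suc b)) (at_left 1)"
      by (intro tendsto_intros) auto
    then show ?thesis unfolding K_def r_def by (simp add: mult_ac)
  qed
  have lt: "ereal 0 < ereal 1" by simp
  note F = interval_integral_FTC_nonneg[OF lt, of K H 0 "real (Suc a) / real (Suc a + Suc b)"]
  have F1: "set_integrable lborel (einterval (ereal 0) (ereal 1)) H \<and> (LBINT x=ereal 0..ereal 1. H x) = real (Suc a) / real (Suc a + Suc b) - 0"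
    apply (rule conjI; rule F)
    using deriv cont nonneg A B by (auto simp: ereal_tendsto_simps1 intro!: AE_I2)
  then show "set_integrable lborel {0<..<1} H" by simp
  from F1 show "(LINT u:{0<..<1}|lborel. H u) = real (Suc a) / real (Suc a + Suc b)"
    by (simp add: interval_lebesgue_integral_def)
qed

lemma unif:
  fixes f F :: "real \<Rightarrow> real"
  assumes f_nonneg: "\<And>x. 0 \<le> f x"
    and f_int: "integrable lborel f"
    and f_total: "(LINT x|lborel. f x) = 1"
    and F_cdf: "\<And>x. F x = (LINT t:{..x}|lborel. f t)"
  shows "distributed (density lborel f) lborel F (\<lambda>u. indicator {0<..<1} u / measure lborel {0<..<(1::real)})"
    and "\<And>x. 0 \<le> F x \<and> F x \<le> 1"
proof -
  define M where "M = density lborel f"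
  have fm[measurable]: "f \<in> borel_measurable borel"
    using borel_measurable_integrable[OF f_int] by simp
  have sM: "sets M = sets borel" unfolding M_def by simp
  have spM: "space M = UNIV" unfolding M_def by simp
  have "emeasure M (space M) = (\<integral>\<^sup>+ x. ennreal (f x) \<partial>lborel)"
    unfolding M_def by (simp add: emeasure_density)
  also have "\<dots> = ennreal (LINT x|lborel. f x)"
    using f_int f_nonneg by (intro nn_integral_eq_integral) auto
  finally have "emeasure M (space M) = 1" using f_total by simp
  then interpret prob_space M by (rule prob_spaceI)
  interpret rd: real_distribution M
    by unfold_locales (simp add: sM)
  have meas: "measure M A = (LINT t:A|lborel. f t)" if [measurable]: "A \<in> sets borel" for A
  proof -
    have "measure M A = integral\<^sup>L M (indicator A)" by (simp add: spM)
    also have "\<dots> = (LINT t|lborel. f t *\<^sub>R indicator A t)"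
      unfolding M_def by (rule integral_density) (auto simp: f_nonneg)
    also have "\<dots> = (LINT t:A|lborel. f t)"
      unfolding set_lebesgue_integral_def by (simp add: mult.commute)
    finally show ?thesis .
  qed
  have Fcdf: "F = cdf M" by (rule ext) (simp add: cdf_def F_cdf meas)
  show F01: "\<And>x. 0 \<le> F x \<and> F x \<le> 1" unfolding Fcdf
    using rd.cdf_nonneg rd.cdf_bounded_prob by auto
  have Fcont: "isCont F x" for x
  proof -
    have "measure M {x} = (LINT t:{x}|lborel. f t)" by (rule meas) simp
    also have "\<dots> = 0" unfolding set_lebesgue_integral_def
      by (rule integral_eq_zero_AE) (use AE_lborel_singleton[of x] in \<open>auto elim!: eventually_mono\<close>)
    finally show ?thesis unfolding Fcdf by (simp add: rd.isCont_cdf)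
  qed
  then have Fcon: "continuous_on UNIV F" by (simp add: continuous_at_imp_continuous_on)
  have Fmono: "F x \<le> F y" if "x \<le> y" for x y unfolding Fcdf using rd.cdf_nondecreasing[OF that] .
  have Fbot: "(F \<longlongrightarrow> 0) at_bot" unfolding Fcdf by (rule rd.cdf_lim_at_bot)
  have Ftop: "(F \<longlongrightarrow> 1) at_top" unfolding Fcdf by (rule rd.cdf_lim_at_top_prob)
  have Fm: "F \<in> borel_measurable M"
    using borel_measurable_continuous_onI[OF Fcon] by (simp add: measurable_cong_sets[OF sM refl])
  have key: "emeasure M {x\<in>space M. F x \<le> a} = emeasure lborel ({0<..<1} \<inter> {..a}) / ennreal 1" for a
  proof (cases "a \<ge> 1")
    case True
    then have "{x\<in>space M. F x \<le> a} = space M" using F01 by (auto intro: order_trans)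
    moreover have "{0<..<1} \<inter> {..a} = {0<..<(1::real)}" using True by auto
    ultimately show ?thesis using \<open>emeasure M (space M) = 1\<close> by simp
  next
    case False
    then have a1: "a < 1" by simp
    define S where "S = {x. F x \<le> a}"
    have SM: "{x\<in>space M. F x \<le> a} = S" unfolding S_def spM by simp
    obtain x0 where x0: "F x0 > a"
    proof -
      have "eventually (\<lambda>x. F x > a) at_top" using order_tendstoD(1)[OF Ftop a1] .
      then show ?thesis using that by (metis eventually_at_top_linorder order_refl)
    qed
    have Sb: "S \<subseteq> {..x0}"
    proof
      fix x assume "x \<in> S"
      then have "F x \<le> a" unfolding S_def by simp
      then show "x \<in> {..x0}" using x0 Fmono[of x0 x] by force
    qed
    show ?thesis
    proof (cases "S = {}")
      case True
      have "a \<le> 0"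
      proof (rule ccontr)
        assume "\<not> a \<le> 0"
        then have "eventually (\<lambda>x. F x < a) at_bot" using order_tendstoD(2)[OF Fbot] by simp
        then obtain x where "F x < a" by (metis eventually_at_bot_linorder order_refl)
        then show False using True unfolding S_def by (auto dest: less_imp_le)
      qed
      then have "{0<..<1} \<inter> {..a} = ({}::real set)" by auto
      then show ?thesis using SM True by simp
    next
      case False
      have clS: "closed S" unfolding S_def by (rule closed_Collect_le[OF Fcon]) simp
      have bS: "bdd_above S" using Sb by (auto simp: bdd_above_def)
      define s where "s = Sup S"
      have sS: "s \<in> S" unfolding s_def by (rule closed_contains_Sup[OF False bS clS])
      have Seq: "S = {..s}"
      proof
        show "S \<subseteq> {..s}" using bS unfolding s_def by (auto intro: cSup_upper)
        show "{..s} \<subseteq> S" using sS Fmono unfolding S_def by (auto intro: order_trans)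
      qed
      have Fs: "F s = a"
      proof (rule ccontr)
        assume "F s \<noteq> a"
        then have lt: "F s < a" using sS unfolding S_def by simp
        have "\<forall>r>0. \<exists>d>0. \<forall>y. y \<noteq> s \<and> norm (y - s) < d \<longrightarrow> norm (F y - F s) < r"
          using Fcont[of s] unfolding isCont_def LIM_eq .
        then have "\<exists>d>0. \<forall>y. y \<noteq> s \<and> norm (y - s) < d \<longrightarrow> norm (F y - F s) < a - F s"
          using lt by simp
        then obtain d where d: "d > 0" "\<And>y. y \<noteq> s \<and> \<bar>y - s\<bar> < d \<longrightarrow> \<bar>F y - F s\<bar> < a - F s"
          by auto
        have "\<bar>F (s + d/2) - F s\<bar> < a - F s" using d by auto
        then have "s + d/2 \<in> S" unfolding S_def by simp
        then show False using Seq d(1) by auto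
      qed
      have a0: "0 \<le> a" using F01[of s] Fs by simp
      have "emeasure M S = ennreal (measure M {..s})" unfolding Seq by (simp add: emeasure_eq_measure)
      also have "measure M {..s} = a" using Fs unfolding Fcdf cdf_def by simp
      finally have L: "emeasure M S = ennreal a" .
      have "{0<..<1} \<inter> {..a} = {0<..a}" using a1 by auto
      then have R: "emeasure lborel ({0<..<1} \<inter> {..a}) = ennreal a" using a0 by simp
      show ?thesis using L R SM by (simp add: divide_ennreal_def)
    qed
  qed
  show "distributed (density lborel f) lborel F (\<lambda>u. indicator {0<..<1} u / measure lborel {0<..<(1::real)})"
    unfolding M_def[symmetric]
    by (rule uniform_distrI_borel[OF Fm _ _ _ key]) auto
qed


lemma rlnr_bound:
  fixes r c :: real assumes "0 < r" "r \<le> c"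
  shows "\<bar>r * ln r\<bar> \<le> 1 + c * c"
proof -
  have u: "ln r \<le> r - 1" using assms(1) by (rule ln_le_minus_one)
  have "ln (inverse r) \<le> inverse r - 1" using assms(1) by (intro ln_le_minus_one) simp
  then have l: "- ln r \<le> inverse r - 1" by (simp add: ln_inverse)
  have "r * ln r \<le> r * (r - 1)" using u assms(1) by (simp add: mult_left_mono)
  also have "\<dots> \<le> r * r" using assms(1) by (simp add: mult_left_mono)
  also have "\<dots> \<le> c * c" using assms by (intro mult_mono) auto
  finally have A: "r * ln r \<le> c * c" .
  have "r * (- ln r) \<le> r * (inverse r - 1)" by (rule mult_left_mono[OF l]) (use assms(1) in simp)
  also have "\<dots> = 1 - r" using assms(1) by (simp add: field_simps)
  finally have B: "- (r * ln r) \<le> 1" using assms(1) by simp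
  have "0 \<le> c * c" by simp
  then show ?thesis unfolding abs_le_iff using A B by linarith
qed

theorem proposition5:
  fixes f F :: "real \<Rightarrow> real" and j k :: nat
  assumes f_nonneg: "\<And>x. 0 \<le> f x"
    and f_int: "integrable lborel f"
    and f_total: "(LINT x|lborel. f x) = 1"
    and F_cdf: "\<And>x. F x = (LINT t:{..x}|lborel. f t)"
    and jk: "1 \<le> j" "j < k"
  shows "KL_dist (g2 f F j k) (g1 f F j) = real j / real k"
proof -
  obtain a where ja: "j = Suc a" using jk(1) by (cases j) auto
  define b where "b = k - j - 1"
  have kb: "k = Suc a + Suc b" using jk ja unfolding b_def by simp
  define c where "c = real (Suc a + Suc b) / real (Suc b)"
  define r where "r = (\<lambda>u::real. c * (1 - u^Suc b))"
  define p1 where "p1 = (\<lambda>u. real (Suc a) * u^a * (r u * ln (r u)))"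
  define p2 where "p2 = (\<lambda>u. - (real (Suc a) * u^a * ln (r u)))"
  define H where "H = (\<lambda>u. real (Suc a) * u^a * ((r u - 1) * ln (r u)))"
  define I where "I = (\<lambda>u::real. indicator {0<..<1::real} u :: real)"
  note D = unif[OF f_nonneg f_int f_total F_cdf]
  have fm[measurable]: "f \<in> borel_measurable borel"
    using borel_measurable_integrable[OF f_int] by simp
  have Fm[measurable]: "F \<in> borel_measurable borel"
    using distributed_measurable[OF D(1)] by simp
  have m1: "measure lborel {0<..<(1::real)} = 1" by simp
  have tr: "integrable lborel (\<lambda>x. f x * g (F x)) \<longleftrightarrow> integrable lborel (\<lambda>u. I u * g u)"
     "(LINT x|lborel. f x * g (F x)) = (LINT u|lborel. I u * g u)"
    if gm[measurable]: "g \<in> borel_measurable borel" for g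
  proof -
    have "integrable lborel (\<lambda>u. indicator {0<..<1} u / measure lborel {0<..<(1::real)} * g u) \<longleftrightarrow> integrable (density lborel f) (\<lambda>x. g (F x))"
      by (rule distributed_integrable[OF D(1)]) auto
    also have "\<dots> \<longleftrightarrow> integrable lborel (\<lambda>x. f x *\<^sub>R g (F x))"
      by (rule integrable_density) (auto simp: f_nonneg)
    finally show "integrable lborel (\<lambda>x. f x * g (F x)) \<longleftrightarrow> integrable lborel (\<lambda>u. I u * g u)"
      by (simp add: m1 I_def)
    have "(LINT u|lborel. indicator {0<..<1} u / measure lborel {0<..<(1::real)} * g u) = (LINT x|density lborel f. g (F x))"
      by (rule distributed_integral[OF D(1)]) auto
    also have "\<dots> = (LINT x|lborel. f x *\<^sub>R g (F x))"
      by (rule integral_density) (auto simp: f_nonneg)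
    finally show "(LINT x|lborel. f x * g (F x)) = (LINT u|lborel. I u * g u)"
      by (simp add: m1 I_def)
  qed
  have g2eq: "g2 f F j k x = g1 f F j x * r (F x)" for x
  proof -
    have e: "real (j * k) / real (k - j) = real (Suc a) * c" unfolding c_def using ja kb by (simp add: field_simps; simp add: algebra_simps)
    have "F x ^ (k - 1) = F x ^ a * F x ^ Suc b" using kb by (simp add: power_add[symmetric])
    then show ?thesis unfolding g2_def g1_def e r_def using ja by (simp add: algebra_simps)
  qed
  have g1eq: "g1 f F j x = f x * (real (Suc a) * F x ^ a)" for x
    unfolding g1_def ja by simp
  have q1: "f x * p1 (F x) = g1 f F j x * (r (F x) * ln (r (F x)))" for x
    unfolding g1eq p1_def by (simp add: mult_ac)
  have q2: "f x * p2 (F x) = - (g1 f F j x * ln (r (F x)))" for x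
    unfolding g1eq p2_def by (simp add: mult_ac)
  have pw1: "g2 f F j k x * ln (g2 f F j k x / g1 f F j x) = f x * p1 (F x)" for x
    unfolding q1 g2eq by (cases "g1 f F j x = 0") (simp_all add: mult_ac)
  have pw2: "g1 f F j x * ln (g1 f F j x / g2 f F j k x) = f x * p2 (F x)" for x
  proof (cases "g1 f F j x = 0")
    case True then show ?thesis unfolding q2 g2eq by simp
  next
    case False
    then have "g1 f F j x / (g1 f F j x * r (F x)) = inverse (r (F x))" by (simp add: field_simps)
    then show ?thesis unfolding q2 g2eq by (simp add: ln_inverse)
  qed
  have p1m[measurable]: "p1 \<in> borel_measurable borel" unfolding p1_def r_def by measurable
  have p2m[measurable]: "p2 \<in> borel_measurable borel" unfolding p2_def r_def by measurable
  have Hint: "integrable lborel (\<lambda>u. I u * H u)"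
    using analytic(1)[of a b] unfolding set_integrable_def I_def H_def r_def c_def by simp
  have Hval: "(LINT u|lborel. I u * H u) = real (Suc a) / real (Suc a + Suc b)"
    using analytic(2)[of a b] unfolding set_lebesgue_integral_def I_def H_def r_def c_def by simp
  have p1int: "integrable lborel (\<lambda>u. I u * p1 u)"
  proof (rule Bochner_Integration.integrable_bound[of lborel "\<lambda>u. real (Suc a) * (1 + c * c) * I u"])
    show "integrable lborel (\<lambda>u. real (Suc a) * (1 + c * c) * I u)"
      unfolding I_def by (intro integrable_mult_right) (simp add: integrable_indicator_iff)
    show "(\<lambda>u. I u * p1 u) \<in> borel_measurable lborel" unfolding I_def by measurable
    show "AE u in lborel. norm (I u * p1 u) \<le> norm (real (Suc a) * (1 + c * c) * I u)"
    proof (rule AE_I2)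
      fix u :: real
      show "norm (I u * p1 u) \<le> norm (real (Suc a) * (1 + c * c) * I u)"
      proof (cases "u \<in> {0<..<1}")
        case True
        have ub: "u^Suc b < 1" using True by (metis greaterThanLessThan_iff less_eq_real_def power_less_one_iff zero_less_Suc)
        have cpos: "c > 0" unfolding c_def by simp
        have r0: "0 < r u" "r u \<le> c" unfolding r_def using ub cpos True by auto
        have ua: "\<bar>u^a\<bar> \<le> 1" using True by (simp add: power_le_one power_abs[symmetric])
        have "\<bar>u^a * (r u * ln (r u))\<bar> \<le> 1 * (1 + c * c)"
          unfolding abs_mult using ua rlnr_bound[OF r0] by (intro mult_mono) auto
        then show ?thesis using True unfolding I_def p1_def by (simp add: abs_mult)
      next
        case False then show ?thesis unfolding I_def by simp
      qed
    qed
  qed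
  have Hsplit: "I u * H u = I u * p1 u + I u * p2 u" for u
    unfolding H_def p1_def p2_def by (simp add: algebra_simps)
  have p2int: "integrable lborel (\<lambda>u. I u * p2 u)"
  proof -
    have "integrable lborel (\<lambda>u. I u * H u - I u * p1 u)" using Hint p1int by (rule Bochner_Integration.integrable_diff)
    then show ?thesis by (simp add: Hsplit)
  qed
  have "KL_div (g2 f F j k) (g1 f F j) = (LINT x|lborel. f x * p1 (F x))"
    unfolding KL_div_def pw1 ..
  also have "\<dots> = (LINT u|lborel. I u * p1 u)" by (rule tr(2)) simp
  finally have K1: "KL_div (g2 f F j k) (g1 f F j) = (LINT u|lborel. I u * p1 u)" .
  have "KL_div (g1 f F j) (g2 f F j k) = (LINT x|lborel. f x * p2 (F x))"
    unfolding KL_div_def pw2 ..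
  also have "\<dots> = (LINT u|lborel. I u * p2 u)" by (rule tr(2)) simp
  finally have K2: "KL_div (g1 f F j) (g2 f F j k) = (LINT u|lborel. I u * p2 u)" .
  have "KL_dist (g2 f F j k) (g1 f F j) = (LINT u|lborel. I u * p1 u + I u * p2 u)"
    unfolding KL_dist_def K1 K2 using p1int p2int by (rule Bochner_Integration.integral_add[symmetric])
  also have "\<dots> = (LINT u|lborel. I u * H u)" by (simp add: Hsplit)
  also have "\<dots> = real j / real k" using Hval ja kb by simp
  finally show ?thesis .
qed

end
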